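(* For $\gamma\in(0,1)$ and $\varphi(x)=x^{1-\gamma}$, \[ \alpha_\varphi=\frac{1}{e\,\Gamma(\gamma)}\int_0^1\frac{e^x}{(-\log x)^{1-\gamma}}\,dx. \]
   Context: $\alpha_\varphi=\inf_{x\in\mathbb{Z}_{\ge1}}\frac{\mathbb{E}_{X\sim\mathrm{Pois}(x)}[\varphi(X)]}{\varphi(x)}$; $\Gamma$ is the Gamma function and $\log$ is the natural logarithm. *)

theory Defs
  imports "HOL-Probability.Probability"
begin

definition alpha_phi :: "(nat \<Rightarrow> real) \<Rightarrow> real" where
  "alpha_phi \<phi> = (INF x\<in>{1::nat..}.
      measure_pmf.expectation (poisson_pmf (real x)) \<phi> / \<phi> x)"

end

theory Submission
  imports Defs "HOL-Analysis.Analysis"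
begin


lemma exp_exp_1: "(\<lambda>k. x ^ k / fact k) sums exp (x::real)"
proof -
  have "(\<lambda>k. x ^ k / fact k) = (\<lambda>k. x^k /\<^sub>R fact k)"
    by (rule ext) (simp add: divide_inverse)
  then show ?thesis using exp_converges[of x] by simp
qed

lemma pois_nn:
  fixes r :: real and f :: "nat \<Rightarrow> real"
  assumes r: "r > 0" and f: "\<And>k. f k \<ge> 0"
    and S: "(\<lambda>k. r ^ k / fact k * exp (-r) * f k) sums S"
  shows "(\<integral>\<^sup>+ k. ennreal (f k) \<partial>measure_pmf (poisson_pmf r)) = ennreal S"
proof -
  have "(\<integral>\<^sup>+ k. ennreal (f k) \<partial>measure_pmf (poisson_pmf r))
      = (\<integral>\<^sup>+ k. ennreal (r ^ k / fact k * exp (-r) * f k) \<partial>count_space UNIV)"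
    unfolding nn_integral_measure_pmf using r f
    by (intro nn_integral_cong) (simp add: ennreal_mult[symmetric] mult_ac)
  also have "\<dots> = (\<Sum>k. ennreal (r ^ k / fact k * exp (-r) * f k))"
    by (rule nn_integral_count_space_nat)
  also have "\<dots> = ennreal (\<Sum>k. r ^ k / fact k * exp (-r) * f k)"
    by (rule suminf_ennreal2) (use r f S in \<open>auto simp: sums_iff\<close>)
  also have "\<dots> = ennreal S"
    by (simp only: sums_unique[OF S, symmetric])
  finally show ?thesis .
qed

lemma pois_exp:
  fixes r :: real and f :: "nat \<Rightarrow> real"
  assumes r: "r > 0" and f: "\<And>k. f k \<ge> 0"
    and S: "(\<lambda>k. r ^ k / fact k * exp (-r) * f k) sums S"
  shows "measure_pmf.expectation (poisson_pmf r) f = S"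
proof -
  have "S \<ge> 0" using S r f by (intro sums_le[OF _ sums_zero S]) auto
  then show ?thesis
    by (subst integral_eq_nn_integral) (use pois_nn[OF assms] f in auto)
qed

lemma fact_choose_real: fixes m j :: nat shows "(fact j * fact m * real ((m+j) choose j) :: real) = fact (m+j)"
proof -
  have h: "fact j * fact m * ((m+j) choose j) = (fact (m+j) :: nat)"
    using binomial_fact_lemma[of j "m+j"] by simp
  have "real (fact j * fact m * ((m+j) choose j)) = real (fact (m+j))"
    by (simp only: h)
  then show ?thesis by (simp only: of_nat_mult of_nat_fact)
qed

lemma pois_bin_term:
  fixes r p :: real and m j :: nat
  assumes r: "r > 0" and p: "0 < p" "p \<le> 1"
  shows "r ^ (m+j) / fact (m+j) * exp (-r) * pmf (binomial_pmf (m+j) p) j = exp (-r) * ((r*p)^j / fact j) * ((r*(1-p))^m / fact m)"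
proof -
  have "fact j * fact m * real (m + j choose j) = fact (m+j)"
    by (rule fact_choose_real)
  then have C: "real (m + j choose j) = fact (m+j) / (fact j * fact m)"
    by (simp add: field_simps)
  have "r ^ (m+j) / fact (m+j) * exp (-r) * pmf (binomial_pmf (m+j) p) j
     = r ^ m * r ^ j / fact (m+j) * exp (-r) * (fact (m+j) / (fact j * fact m) * p ^ j * (1-p)^m)"
    using p by (simp add: C power_add)
  also have "\<dots> = exp (-r) * ((r^j*p^j) / fact j) * ((r^m*(1-p)^m) / fact m)"
    by (simp add: divide_simps)
  finally show ?thesis by (simp add: power_mult_distrib)
qed

lemma thinning:
  fixes r p :: real
  assumes r: "r > 0" and p: "0 < p" "p \<le> 1"
  shows "bind_pmf (poisson_pmf r) (\<lambda>k. binomial_pmf k p) = poisson_pmf (r * p)"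
proof (rule pmf_eqI)
  fix j :: nat
  define a where "a = (\<lambda>k. r ^ k / fact k * exp (-r) * pmf (binomial_pmf k p) j)"
  have a0: "a k = 0" if "k < j" for k
    using that p by (simp add: a_def)
  have ash: "a (m + j) = exp (-r) * ((r*p)^j / fact j) * ((r*(1-p))^m / fact m)" for m
    unfolding a_def by (rule pois_bin_term[OF r p])
  have S1: "(\<lambda>m. exp (-r) * ((r*p)^j / fact j) * ((r*(1-p))^m / fact m)) sums
        (exp (-r) * ((r*p)^j / fact j) * exp (r*(1-p)))"
    by (intro sums_mult exp_exp_1)
  have X: "exp (-r) * ((r*p)^j / fact j) * exp (r*(1-p)) = (r*p)^j / fact j * exp (-(r*p))"
  proof -
    have e1: "-r + r*(1-p) = -(r*p)" by (simp add: algebra_simps)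
    have "exp (-r) * exp (r*(1-p)) = exp (-r + r*(1-p))" by (simp only: exp_add)
    then have "exp (-r) * exp (r*(1-p)) = exp (-(r*p))" by (simp only: e1)
    then show ?thesis by (metis mult.commute mult.left_commute)
  qed
  have L: "(\<lambda>m. a (m + j)) = (\<lambda>m. exp (-r) * ((r*p)^j / fact j) * ((r*(1-p))^m / fact m))"
    by (rule ext) (rule ash)
  have "(\<lambda>m. a (m + j)) sums ((r*p)^j / fact j * exp (-(r*p)))"
    unfolding L X[symmetric] by (rule S1)
  then have "a sums ((r*p)^j / fact j * exp (-(r*p)))"
    using sums_zero_iff_shift[of j a] a0 by blast
  then have "(\<lambda>k. r ^ k / fact k * exp (-r) * pmf (binomial_pmf k p) j) sums ((r*p)^j / fact j * exp (-(r*p)))"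
    unfolding a_def .
  from pois_exp[OF r _ this] have E: "measure_pmf.expectation (poisson_pmf r) (\<lambda>k. pmf (binomial_pmf k p) j)
      = (r*p)^j / fact j * exp (-(r*p))"
    by (simp only: pmf_nonneg)
  have P1: "pmf (bind_pmf (poisson_pmf r) (\<lambda>k. binomial_pmf k p)) j = measure_pmf.expectation (poisson_pmf r) (\<lambda>k. pmf (binomial_pmf k p) j)"
    by (rule pmf_bind)
  have P2: "pmf (poisson_pmf (r * p)) j = (r*p)^j / fact j * exp (-(r*p))"
    using r p by (intro pmf_poisson) simp
  show "pmf (bind_pmf (poisson_pmf r) (\<lambda>k. binomial_pmf k p)) j = pmf (poisson_pmf (r * p)) j"
    unfolding P1 P2 E ..
qed

lemma tangent_powr:
  fixes s m y :: real
  assumes s: "0 \<le> s" "s \<le> 1" and m: "m > 0" and y: "y \<ge> 0"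
  shows "y powr s \<le> m powr s * (s * y / m + (1 - s))"
proof (cases "y = 0")
  case True
  then show ?thesis using s m by simp
next
  case False
  then have yp: "y > 0" using y by simp
  have "(y/m) powr s * 1 powr (1-s) \<le> s * (y/m) + (1-s) * 1"
    using s m yp by (intro Youngs_inequality_0) auto
  then have "y powr s / m powr s \<le> s * y / m + (1 - s)"
    using m yp by (simp add: powr_divide)
  then show ?thesis using m by (simp add: divide_simps mult_ac)
qed

lemma bin_jensen:
  fixes s p :: real
  assumes s: "0 \<le> s" "s \<le> 1" and p: "0 < p" "p \<le> 1"
  shows "(\<Sum>j\<le>k. pmf (binomial_pmf k p) j * real j powr s) \<le> (real k * p) powr s"
proof (cases "k = 0")
  case True
  then show ?thesis by simp
next
  case False
  define m where "m = real k * p"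
  have m: "m > 0" using False p by (simp add: m_def)
  have B: "pmf (binomial_pmf k p) j = Bernstein k j p" for j
    using p by (simp add: Bernstein_def)
  have "(\<Sum>j\<le>k. pmf (binomial_pmf k p) j * real j powr s)
      \<le> (\<Sum>j\<le>k. Bernstein k j p * (m powr s * (s * real j / m + (1 - s))))"
    unfolding B
    by (intro sum_mono mult_left_mono tangent_powr) (use s m p in \<open>auto simp: Bernstein_def\<close>)
  also have "\<dots> = (\<Sum>j\<le>k. (m powr s * s / m) * (real j * Bernstein k j p) + (m powr s * (1 - s)) * Bernstein k j p)"
    using m by (intro sum.cong refl) (simp add: field_simps)
  also have "\<dots> = (m powr s * s / m) * (\<Sum>j\<le>k. real j * Bernstein k j p) + (m powr s * (1 - s)) * (\<Sum>j\<le>k. Bernstein k j p)"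
    by (simp only: sum.distrib sum_distrib_left)
  also have "\<dots> = m powr s"
    using m unfolding m_def by (simp add: field_simps)
  finally show ?thesis by (simp add: m_def)
qed

lemma nn_bin:
  fixes s p :: real
  assumes p: "0 < p" "p \<le> 1"
  shows "(\<integral>\<^sup>+ j. ennreal (real j powr s) \<partial>measure_pmf (binomial_pmf k p))
       = ennreal (\<Sum>j\<le>k. pmf (binomial_pmf k p) j * real j powr s)"
proof -
  have "(\<integral>\<^sup>+ j. ennreal (real j powr s) \<partial>measure_pmf (binomial_pmf k p))
      = (\<Sum>j\<le>k. ennreal (real j powr s) * pmf (binomial_pmf k p) j)"
    by (rule nn_integral_measure_pmf_support) (use p in \<open>auto simp: set_pmf_binomial_eq split: if_splits\<close>)
  also have "\<dots> = (\<Sum>j\<le>k. ennreal (pmf (binomial_pmf k p) j * real j powr s))"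
    by (intro sum.cong refl) (simp add: ennreal_mult[symmetric] mult.commute)
  also have "\<dots> = ennreal (\<Sum>j\<le>k. pmf (binomial_pmf k p) j * real j powr s)"
    by (rule sum_ennreal) simp
  finally show ?thesis .
qed

lemma summable_pois_powr:
  fixes r s :: real
  assumes r: "r > 0" and s: "0 \<le> s" "s \<le> 1"
  shows "summable (\<lambda>k. r ^ k / fact k * exp (-r) * real k powr s)"
proof (rule summable_comparison_test)
  show "summable (\<lambda>k. exp (-r) * (inverse (fact k) * (2*r) ^ k))"
    by (intro summable_mult summable_exp)
  show "\<exists>N. \<forall>n\<ge>N. norm (r ^ n / fact n * exp (-r) * real n powr s) \<le> exp (-r) * (inverse (fact n) * (2*r) ^ n)"
  proof (intro exI allI impI)
    fix n :: nat
    have pw: "real n powr s \<le> 2 ^ n"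
    proof (cases "n = 0")
      case False
      then have "real n powr s \<le> real n powr 1"
        using s by (intro powr_mono) auto
      also have "\<dots> \<le> 2 ^ n"
        using False less_exp[of n] by (simp add: of_nat_less_two_power less_imp_le)
      finally show ?thesis .
    qed simp
    have "norm (r ^ n / fact n * exp (-r) * real n powr s) = r ^ n / fact n * exp (-r) * real n powr s"
      using r by simp
    also have "\<dots> \<le> r ^ n / fact n * exp (-r) * 2 ^ n"
      using r by (intro mult_left_mono pw) auto
    also have "\<dots> = exp (-r) * (inverse (fact n) * (2*r) ^ n)"
      by (simp add: power_mult_distrib field_simps)
    finally show "norm (r ^ n / fact n * exp (-r) * real n powr s) \<le> exp (-r) * (inverse (fact n) * (2*r) ^ n)" .
  qed
qed

lemma pois_h:
  fixes r s :: real
  assumes r: "r > 0" and s: "0 \<le> s" "s \<le> 1"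
  shows "(\<integral>\<^sup>+ k. ennreal (real k powr s) \<partial>measure_pmf (poisson_pmf r))
       = ennreal (measure_pmf.expectation (poisson_pmf r) (\<lambda>k. real k powr s))"
proof -
  have S: "(\<lambda>k. r ^ k / fact k * exp (-r) * real k powr s) sums (\<Sum>k. r ^ k / fact k * exp (-r) * real k powr s)"
    using summable_pois_powr[OF assms] by (simp add: summable_sums)
  show ?thesis
    using pois_nn[OF r _ S] pois_exp[OF r _ S] by simp
qed

lemma main_ineq:
  fixes s :: real and x :: nat
  assumes s: "0 \<le> s" "s \<le> 1" and x: "x \<ge> 1"
  shows "measure_pmf.expectation (poisson_pmf 1) (\<lambda>k. real k powr s)
       \<le> measure_pmf.expectation (poisson_pmf (real x)) (\<lambda>k. real k powr s) / real x powr s"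
proof -
  define r where "r = real x"
  have r: "r > 0" "r \<ge> 1" using x by (auto simp: r_def)
  define p where "p = 1 / r"
  have p: "0 < p" "p \<le> 1" using r by (auto simp: p_def)
  have rp: "r * p = 1" using r by (simp add: p_def)
  define Er where "Er = measure_pmf.expectation (poisson_pmf r) (\<lambda>k. real k powr s)"
  have Er0: "Er \<ge> 0" unfolding Er_def by (intro integral_nonneg_AE) auto
  have "ennreal (measure_pmf.expectation (poisson_pmf 1) (\<lambda>k. real k powr s))
      = (\<integral>\<^sup>+ k. ennreal (real k powr s) \<partial>measure_pmf (poisson_pmf 1))"
    using pois_h[of 1 s] s by simp
  also have "\<dots> = (\<integral>\<^sup>+ k. ennreal (real k powr s) \<partial>measure_pmf (bind_pmf (poisson_pmf r) (\<lambda>k. binomial_pmf k p)))"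
    using thinning[OF r(1) p] rp by simp
  also have "\<dots> = (\<integral>\<^sup>+ k. (\<integral>\<^sup>+ j. ennreal (real j powr s) \<partial>measure_pmf (binomial_pmf k p)) \<partial>measure_pmf (poisson_pmf r))"
    by simp
  also have "\<dots> \<le> (\<integral>\<^sup>+ k. ennreal (real k powr s * (1 / r powr s)) \<partial>measure_pmf (poisson_pmf r))"
  proof (intro nn_integral_mono)
    fix k :: nat
    have "(real k * p) powr s = real k powr s * (1 / r powr s)"
      using r by (simp add: p_def powr_divide)
    then show "(\<integral>\<^sup>+ j. ennreal (real j powr s) \<partial>measure_pmf (binomial_pmf k p)) \<le> ennreal (real k powr s * (1 / r powr s))"
      unfolding nn_bin[OF p] using bin_jensen[OF s p, of k] by (simp add: ennreal_leI)
  qed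
  also have "\<dots> = (\<integral>\<^sup>+ k. ennreal (real k powr s) * ennreal (1 / r powr s) \<partial>measure_pmf (poisson_pmf r))"
    by (intro nn_integral_cong) (subst ennreal_mult[symmetric], auto)
  also have "\<dots> = ennreal Er * ennreal (1 / r powr s)"
    by (subst nn_integral_multc) (use pois_h[OF r(1) s] in \<open>auto simp: Er_def\<close>)
  also have "\<dots> = ennreal (Er / r powr s)"
    using Er0 r by (simp add: ennreal_mult[symmetric])
  finally have "ennreal (measure_pmf.expectation (poisson_pmf 1) (\<lambda>k. real k powr s)) \<le> ennreal (Er / r powr s)" .
  then show ?thesis
    using Er0 r by (simp add: Er_def r_def ennreal_le_iff)
qed



lemma gamma_scaled:
  fixes g c :: real
  assumes g: "0 < g" and c: "c > 0"
  shows "(\<integral>\<^sup>+ t. ennreal (indicator {0<..} t * exp (-(c*t)) / t powr (1-g)) \<partial>lborel)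
       = ennreal (Gamma g / c powr g)"
proof -
  define F where "F = (\<lambda>t::real. ennreal (indicator {0..} t * t powr (g - 1) / exp t))"
  define G where "G = (\<lambda>t::real. ennreal (indicator {0<..} t * exp (-(c*t)) / t powr (1-g)))"
  have Fm: "F \<in> borel_measurable borel" unfolding F_def by measurable
  have FG: "F (0 + c * x) = ennreal (c powr (g - 1)) * G x" for x
  proof (cases "x > 0")
    case True
    have "(c * x) powr (g - 1) = c powr (g - 1) * (1 / x powr (1 - g))"
      using True c by (simp add: powr_mult powr_minus_divide[symmetric])
    then show ?thesis using True c
      by (simp add: F_def G_def ennreal_mult[symmetric] exp_minus field_simps)
  next
    case False
    then show ?thesis using c
      by (cases "x = 0") (auto simp: F_def G_def indicator_def zero_le_mult_iff)
  qed
  have "ennreal (Gamma g) = (\<integral>\<^sup>+ t. F t \<partial>lborel)"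
    unfolding F_def by (rule Gamma_conv_nn_integral_real[OF g])
  also have "\<dots> = ennreal c * (\<integral>\<^sup>+ x. F (0 + c * x) \<partial>lborel)"
    using nn_integral_real_affine[OF Fm, of c 0] c by simp
  also have "\<dots> = ennreal c * (ennreal (c powr (g - 1)) * (\<integral>\<^sup>+ x. G x \<partial>lborel))"
    unfolding FG by (subst nn_integral_cmult) (auto simp: G_def)
  also have "\<dots> = ennreal (c powr g) * (\<integral>\<^sup>+ x. G x \<partial>lborel)"
  proof -
    have "c * c powr (g - 1) = c powr g" using c by (simp add: powr_mult_base)
    then show ?thesis using c by (simp add: mult.assoc[symmetric] ennreal_mult[symmetric])
  qed
  finally have E: "ennreal (Gamma g) = ennreal (c powr g) * (\<integral>\<^sup>+ x. G x \<partial>lborel)" .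
  have "(\<integral>\<^sup>+ x. G x \<partial>lborel) = ennreal (1 / c powr g) * (ennreal (c powr g) * (\<integral>\<^sup>+ x. G x \<partial>lborel))"
    using c by (simp add: mult.assoc[symmetric] ennreal_mult[symmetric])
  also have "\<dots> = ennreal (Gamma g / c powr g)"
    unfolding E[symmetric] using c Gamma_real_pos[OF g]
    by (simp add: ennreal_mult[symmetric])
  finally show ?thesis unfolding G_def .
qed

lemma summable_T:
  fixes g :: real assumes g: "0 < g"
  shows "summable (\<lambda>k. 1 / (fact k * real (Suc k) powr g))"
proof (rule summable_comparison_test')
  show "summable (\<lambda>k. 1 ^ k / fact k :: real)"
    using exp_exp_1[of 1] by (simp add: sums_iff)
  fix k :: nat
  have "1 \<le> real (Suc k) powr g" using g by (intro ge_one_powr_ge_zero) auto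
  then have "fact k \<le> fact k * real (Suc k) powr g"
    by (simp add: mult_le_cancel_left1)
  then show "norm (1 / (fact k * real (Suc k) powr g)) \<le> 1 ^ k / fact k"
    by (simp add: divide_simps)
qed

lemma series_integral:
  fixes g :: real
  assumes g: "0 < g"
  shows "(\<integral>\<^sup>+ t. ennreal (indicator {0<..} t * exp (exp (-t)) * exp (-t) / t powr (1-g)) \<partial>lborel)
       = ennreal (Gamma g * (\<Sum>k. 1 / (fact k * real (Suc k) powr g)))"
proof -
  define G where "G = (\<lambda>(k::nat) (t::real). indicator {0<..} t * exp (-(real (Suc k) * t)) / t powr (1-g))"
  have G0: "G k t \<ge> 0" for k t by (simp add: G_def indicator_def)
  have pt: "(\<Sum>k. ennreal (1 / fact k) * ennreal (G k t))
      = ennreal (indicator {0<..} t * exp (exp (-t)) * exp (-t) / t powr (1-g))" for t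
  proof -
    have "(\<lambda>k. exp (-t) ^ k / fact k * (indicator {0<..} t * exp (-t) / t powr (1-g))) sums
          (exp (exp (-t)) * (indicator {0<..} t * exp (-t) / t powr (1-g)))"
      by (intro sums_mult2 exp_exp_1)
    moreover have "exp (-t) ^ k / fact k * (indicator {0<..} t * exp (-t) / t powr (1-g)) = 1 / fact k * G k t" for k
    proof -
      have "exp (-t) ^ k = exp (real k * (-t))" by (rule exp_of_nat_mult[symmetric])
      then have "exp (-t) ^ k * exp (-t) = exp (real k * (-t) + (-t))" by (simp only: exp_add)
      also have "real k * (-t) + (-t) = -(real (Suc k) * t)" by (simp add: algebra_simps)
      finally have "exp (-t) ^ k * exp (-t) = exp (-(real (Suc k) * t))" .
      then show ?thesis unfolding G_def by (simp add: field_simps)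
    qed
    ultimately have S: "(\<lambda>k. 1 / fact k * G k t) sums (indicator {0<..} t * exp (exp (-t)) * exp (-t) / t powr (1-g))"
      by (simp add: mult_ac)
    have "(\<Sum>k. ennreal (1 / fact k) * ennreal (G k t)) = (\<Sum>k. ennreal (1 / fact k * G k t))"
      using G0 by (simp add: ennreal_mult[symmetric])
    also have "\<dots> = ennreal (\<Sum>k. 1 / fact k * G k t)"
      using S G0 by (intro suminf_ennreal2) (auto simp: sums_iff)
    finally show ?thesis using S by (simp add: sums_iff)
  qed
  have Gm: "(\<lambda>t. ennreal (1 / fact k) * ennreal (G k t)) \<in> borel_measurable lborel" for k
    unfolding G_def by measurable
  have "(\<integral>\<^sup>+ t. ennreal (indicator {0<..} t * exp (exp (-t)) * exp (-t) / t powr (1-g)) \<partial>lborel)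
      = (\<integral>\<^sup>+ t. (\<Sum>k. ennreal (1 / fact k) * ennreal (G k t)) \<partial>lborel)"
    by (simp add: pt)
  also have "\<dots> = (\<Sum>k. (\<integral>\<^sup>+ t. ennreal (1 / fact k) * ennreal (G k t) \<partial>lborel))"
    by (rule nn_integral_suminf) (use Gm in simp)
  also have "\<dots> = (\<Sum>k. ennreal (Gamma g * (1 / (fact k * real (Suc k) powr g))))"
  proof (intro suminf_cong)
    fix k
    have "(\<integral>\<^sup>+ t. ennreal (1 / fact k) * ennreal (G k t) \<partial>lborel) = ennreal (1 / fact k) * (\<integral>\<^sup>+ t. ennreal (G k t) \<partial>lborel)"
      by (rule nn_integral_cmult) (simp add: G_def)
    also have "\<dots> = ennreal (1 / fact k) * ennreal (Gamma g / real (Suc k) powr g)"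
      unfolding G_def using gamma_scaled[OF g, of "real (Suc k)"] by simp
    also have "\<dots> = ennreal (Gamma g * (1 / (fact k * real (Suc k) powr g)))"
      using Gamma_real_pos[OF g] by (simp add: ennreal_mult[symmetric])
    finally show "(\<integral>\<^sup>+ t. ennreal (1 / fact k) * ennreal (G k t) \<partial>lborel) = ennreal (Gamma g * (1 / (fact k * real (Suc k) powr g)))" .
  qed
  also have "\<dots> = ennreal (\<Sum>k. Gamma g * (1 / (fact k * real (Suc k) powr g)))"
    using Gamma_real_pos[OF g] summable_mult[OF summable_T[OF g], of "Gamma g"]
    by (intro suminf_ennreal2) auto
  also have "\<dots> = ennreal (Gamma g * (\<Sum>k. 1 / (fact k * real (Suc k) powr g)))"
    by (simp only: suminf_mult[OF summable_T[OF g]])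
  finally show ?thesis .
qed

lemma lbint_formula:
  fixes g :: real
  assumes g: "0 < g" "g < 1"
  shows "(LBINT x=0..1. exp x / (- ln x) powr (1 - g)) = Gamma g * (\<Sum>k. 1 / (fact k * real (Suc k) powr g))"
proof -
  define T where "T = (\<Sum>k. 1 / (fact k * real (Suc k) powr g))"
  define f where "f = (\<lambda>x::real. exp x / (- ln x) powr (1 - g))"
  define H where "H = (\<lambda>t::real. indicator {..<0} t * (f (exp t) * exp t))"
  have T0: "T \<ge> 0" unfolding T_def
    by (intro suminf_nonneg summable_T g) auto
  have G0: "Gamma g > 0" using g by (intro Gamma_real_pos)
  have H0: "H t \<ge> 0" for t by (simp add: H_def f_def indicator_def)
  have Hm: "H \<in> borel_measurable borel" unfolding H_def f_def by measurable
  have Hm': "(\<lambda>t. ennreal (H t)) \<in> borel_measurable borel" using Hm by measurable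
  have Href: "H (0 + -1 * x) = indicator {0<..} x * exp (exp (-x)) * exp (-x) / x powr (1-g)" for x
    by (cases "x > 0") (auto simp: H_def f_def indicator_def)
  have N: "(\<integral>\<^sup>+ t. ennreal (H t) \<partial>lborel) = ennreal (Gamma g * T)"
  proof -
    have "(\<integral>\<^sup>+ t. ennreal (H t) \<partial>lborel) = (\<integral>\<^sup>+ x. ennreal (H (0 + -1 * x)) \<partial>lborel)"
      using nn_integral_real_affine[OF Hm', of "-1" 0] by simp
    also have "\<dots> = ennreal (Gamma g * T)"
      unfolding Href T_def by (rule series_integral[OF g(1)])
    finally show ?thesis .
  qed
  have E0: "einterval (-\<infinity>) (0::ereal) = {..<0}"
    by (auto simp: einterval_def zero_ereal_def)
  have int: "set_integrable lborel (einterval (-\<infinity>) 0) (\<lambda>x. f (exp x) * exp x)"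
    unfolding set_integrable_def E0
  proof (rule integrableI_nonneg)
    show "(\<lambda>x. indicator {..<0} x *\<^sub>R (f (exp x) * exp x)) \<in> borel_measurable lborel"
      using Hm by (simp add: H_def)
    show "AE x in lborel. 0 \<le> indicator {..<0} x *\<^sub>R (f (exp x) * exp x)"
      using H0 by (simp add: H_def)
    show "(\<integral>\<^sup>+ x. ennreal (indicator {..<0} x *\<^sub>R (f (exp x) * exp x)) \<partial>lborel) < \<infinity>"
      using N by (simp add: H_def)
  qed
  have A: "((ereal \<circ> exp \<circ> real_of_ereal) \<longlongrightarrow> (0::ereal)) (at_right (-\<infinity>))"
    unfolding zero_ereal_def ereal_tendsto_simps by (rule exp_at_bot)
  have B: "((ereal \<circ> exp \<circ> real_of_ereal) \<longlongrightarrow> (1::ereal)) (at_left (0::ereal))"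
    unfolding zero_ereal_def one_ereal_def ereal_tendsto_simps
    by (auto intro!: tendsto_eq_intros)
  have contf: "isCont f (exp x)" if "x < 0" for x
  proof -
    have "exp x < 1" using that by simp
    then have "ln (exp x) < 0" by simp
    then show ?thesis unfolding f_def using that
      by (intro continuous_intros) auto
  qed
  have fnn: "0 \<le> f (exp x)" for x by (simp add: f_def)
  have sub: "(LBINT x=0..1. f x) = (LBINT x=-\<infinity>..0. f (exp x) * exp x)"
    by (rule interval_integral_substitution_nonneg(2)[OF _ _ _ _ _ _ A B int])
       (auto simp: zero_ereal_def intro!: contf fnn)
  have "(LBINT x=-\<infinity>..0. f (exp x) * exp x) = integral\<^sup>L lborel H"
    unfolding interval_lebesgue_integral_def set_lebesgue_integral_def E0 H_def by simp
  also have "\<dots> = enn2real (\<integral>\<^sup>+ t. ennreal (H t) \<partial>lborel)"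
    by (rule integral_eq_nn_integral) (use Hm H0 in auto)
  also have "\<dots> = Gamma g * T"
    unfolding N using T0 G0 by simp
  finally show ?thesis using sub unfolding f_def T_def by simp
qed


lemma S_eq_T:
  fixes g :: real assumes g: "0 < g" "g < 1"
  shows "(\<lambda>k. real k powr (1 - g) / fact k) sums (\<Sum>k. 1 / (fact k * real (Suc k) powr g))"
proof -
  have eq: "real (Suc k) powr (1 - g) / fact (Suc k) = 1 / (fact k * real (Suc k) powr g)" for k
  proof -
    have "real (Suc k) powr (1 - g) = real (Suc k) / real (Suc k) powr g"
      by (simp add: powr_diff)
    moreover have "(fact (Suc k) :: real) = real (Suc k) * fact k" by simp
    moreover have "(fact k :: real) > 0" by simp
    moreover have "fact k + fact k * real k > (0::real)"
      using \<open>(fact k :: real) > 0\<close> by (simp add: add_pos_nonneg)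
    ultimately show ?thesis by (simp add: field_simps)
  qed
  have "(\<lambda>k. real (Suc k) powr (1 - g) / fact (Suc k)) sums (\<Sum>k. 1 / (fact k * real (Suc k) powr g))"
    unfolding eq using summable_T[OF g(1)] by (simp add: summable_sums)
  then show ?thesis using g by (subst (asm) sums_Suc_iff) simp
qed

theorem mainTheorem12:
  fixes \<gamma> :: real
  assumes "0 < \<gamma>" and "\<gamma> < 1"
  shows "alpha_phi (\<lambda>k. real k powr (1 - \<gamma>)) =
    1 / (exp 1 * Gamma \<gamma>) * (LBINT x=0..1. exp x / (- ln x) powr (1 - \<gamma>))"
proof -
  define s where "s = 1 - \<gamma>"
  have s: "0 \<le> s" "s \<le> 1" using assms by (auto simp: s_def)
  define T where "T = (\<Sum>k. 1 / (fact k * real (Suc k) powr \<gamma>))"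
  define R where "R = (\<lambda>x::nat. measure_pmf.expectation (poisson_pmf (real x)) (\<lambda>k. real k powr s) / real x powr s)"
  define E1 where "E1 = measure_pmf.expectation (poisson_pmf 1) (\<lambda>k. real k powr s)"
  have R1: "R 1 = E1" by (simp add: R_def E1_def)
  have alpha: "alpha_phi (\<lambda>k. real k powr s) = E1"
  proof -
    have "alpha_phi (\<lambda>k. real k powr s) = Inf (R ` {1..})"
      by (simp add: alpha_phi_def R_def)
    also have "\<dots> = R 1"
    proof (rule cInf_eq_minimum)
      show "R 1 \<in> R ` {1..}" by simp
      fix y assume "y \<in> R ` {1..}"
      then obtain x where x: "x \<ge> 1" "y = R x" by auto
      show "R 1 \<le> y"
        using main_ineq[OF s x(1)] by (simp add: x(2) R_def)
    qed
    finally show ?thesis using R1 by simp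
  qed
  have ST: "(\<lambda>k. real k powr s / fact k) sums T"
    unfolding s_def T_def by (rule S_eq_T[OF assms])
  have "(\<lambda>k. 1 ^ k / fact k * exp (-1) * real k powr s) sums (exp (-1) * T)"
  proof -
    have "(\<lambda>k. exp (-1) * (real k powr s / fact k)) sums (exp (-1) * T)"
      by (rule sums_mult[OF ST])
    then show ?thesis by (simp add: mult_ac)
  qed
  then have E1v: "E1 = exp (-1) * T"
    unfolding E1_def by (rule pois_exp[rotated 2]) auto
  have L: "(LBINT x=0..1. exp x / (- ln x) powr (1 - \<gamma>)) = Gamma \<gamma> * T"
    unfolding T_def by (rule lbint_formula[OF assms])
  have G0: "Gamma \<gamma> > 0" using assms by (intro Gamma_real_pos)
  have alpha': "alpha_phi (\<lambda>k. real k powr (1 - \<gamma>)) = E1"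
    using alpha by (simp add: s_def)
  show ?thesis
    unfolding L alpha' E1v using G0 by (simp add: exp_minus field_simps)
qed

end
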